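(* Fix a coordinate $i$ and run the COCOB algorithm (defined in the context) on an arbitrary sequence of outcomes with $|g_{t,i}|\le L_i$ for all $t$. Define the wealth $\mathrm{Wealth}_{t,i}=L_i+\mathrm{Reward}_{t,i}$. Then for every $t\ge0$: (a) $\mathrm{Wealth}_{t,i}>0$, and $|\beta_{t,i}g_{t+1,i}|<1$; (b) $\mathrm{Wealth}_{t,i}\ \ge\ L_i\exp\left(\frac{\theta_{t,i}^2}{2L_i(G_{t,i}+L_i)}-\sum_{j=1}^{t}\frac{|g_{j,i}|}{2(L_i+G_{j-1,i})}\right)\ \ge\ L_i\exp\left(\frac{\theta_{t,i}^2}{2L_i(G_{t,i}+L_i)}-\frac12\ln\frac{G_{t,i}}{L_i}\right)$.
   Context: COCOB algorithm (COntinuous COin Betting). Input: constants $L_i>0$ for $i=1,\dots,d$, an initial point $\boldsymbol{w}_1\in\mathbb{R}^d$, and a number of rounds $T$. Initialize $G_{0,i}=L_i$, $\mathrm{Reward}_{0,i}=0$ and $\theta_{0,i}=0$ for every $i$. For $t=1,\dots,T$: a vector $\boldsymbol{g}_t\in\mathbb{R}^d$ is received at the current point $\boldsymbol{w}_t$; it may depend arbitrarily on $\boldsymbol{w}_1,\dots,\boldsymbol{w}_t$. Then for each $i=1,\dots,d$: - $G_{t,i}=G_{t-1,i}+|g_{t,i}|$; - $\mathrm{Reward}_{t,i}=\mathrm{Reward}_{t-1,i}+(w_{t,i}-w_{1,i})g_{t,i}$; - $\theta_{t,i}=\theta_{t-1,i}+g_{t,i}$; - $\beta_{t,i}=\frac{1}{L_i}\left(2\sigma\left(\frac{2\theta_{t,i}}{G_{t,i}+L_i}\right)-1\right)$,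 where $\sigma(x)=\frac{1}{1+e^{-x}}$; - $w_{t+1,i}=w_{1,i}+\beta_{t,i}(L_i+\mathrm{Reward}_{t,i})$. In particular $w_{t+1,i}-w_{1,i}=\beta_{t,i}\mathrm{Wealth}_{t,i}$, so that $\mathrm{Wealth}_{t+1,i}=\mathrm{Wealth}_{t,i}(1+\beta_{t,i}g_{t+1,i})$. *)

theory Defs
  imports Complex_Main
begin

text \<open>COCOB, one fixed coordinate i. The outcomes of coordinate i are g 1, g 2, ...
  (index 0 unused). L is L_i > 0, w1 is w_{1,i}.\<close>

definition sigmoid :: "real \<Rightarrow> real" where
  "sigmoid x = 1 / (1 + exp (- x))"

definition cocob_G :: "real \<Rightarrow> (nat \<Rightarrow> real) \<Rightarrow> nat \<Rightarrow> real" where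
  "cocob_G L g t = L + (\<Sum>j = 1..t. \<bar>g j\<bar>)"

definition cocob_theta :: "(nat \<Rightarrow> real) \<Rightarrow> nat \<Rightarrow> real" where
  "cocob_theta g t = (\<Sum>j = 1..t. g j)"

definition cocob_beta :: "real \<Rightarrow> (nat \<Rightarrow> real) \<Rightarrow> nat \<Rightarrow> real" where
  "cocob_beta L g t =
     (1 / L) * (2 * sigmoid (2 * cocob_theta g t / (cocob_G L g t + L)) - 1)"

text \<open>Iterates w_t (t \<ge> 1; the value at 0 is an unused convention) and Reward_t.\<close>
fun cocob_w :: "real \<Rightarrow> real \<Rightarrow> (nat \<Rightarrow> real) \<Rightarrow> nat \<Rightarrow> real"
and cocob_reward :: "real \<Rightarrow> real \<Rightarrow> (nat \<Rightarrow> real) \<Rightarrow> nat \<Rightarrow> real" where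
  "cocob_w L w1 g 0 = w1"
| "cocob_w L w1 g (Suc 0) = w1"
| "cocob_w L w1 g (Suc (Suc t)) =
     w1 + cocob_beta L g (Suc t) * (L + cocob_reward L w1 g (Suc t))"
| "cocob_reward L w1 g 0 = 0"
| "cocob_reward L w1 g (Suc t) =
     cocob_reward L w1 g t + (cocob_w L w1 g (Suc t) - w1) * g (Suc t)"

definition cocob_wealth :: "real \<Rightarrow> real \<Rightarrow> (nat \<Rightarrow> real) \<Rightarrow> nat \<Rightarrow> real" where
  "cocob_wealth L w1 g t = L + cocob_reward L w1 g t"

end

theory Submission
  imports Defs "HOL-Probability.Hoeffding" "HOL-Analysis.Convex"
begin

lemma cosh_bound:
  fixes u :: real
  shows "exp u + exp (-u) \<le> 2 * exp (u^2/2)"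
proof -
  have h: "-(2*\<bar>u\<bar>) * (1/2) + ln (1 + (1/2) * (exp (2*\<bar>u\<bar>) - 1)) \<le> (2*\<bar>u\<bar>)^2/8"
    using Hoeffdings_lemma_aux[of "2*\<bar>u\<bar>" "1/2"] by simp
  have pos: "1 + (1/2) * (exp (2*\<bar>u\<bar>) - 1) > (0::real)"
  proof -
    have "exp (2*\<bar>u\<bar>) > 0" by simp
    thus ?thesis by (simp add: field_simps add_pos_pos)
  qed
  have "ln (1 + (1/2) * (exp (2*\<bar>u\<bar>) - 1)) \<le> \<bar>u\<bar> + u^2/2"
    using h by (simp add: power2_eq_square)
  hence "1 + (1/2) * (exp (2*\<bar>u\<bar>) - 1) \<le> exp (\<bar>u\<bar> + u^2/2)"
    using pos by (metis exp_le_cancel_iff exp_ln)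
  hence "(exp (-\<bar>u\<bar>) + exp \<bar>u\<bar>) * exp \<bar>u\<bar> \<le> 2 * exp (u^2/2) * exp \<bar>u\<bar>"
    by (simp add: algebra_simps exp_add[symmetric] mult_exp_exp)
  hence "exp (-\<bar>u\<bar>) + exp \<bar>u\<bar> \<le> 2 * exp (u^2/2)" by simp
  thus ?thesis by (cases "u \<ge> 0") auto
qed

definition bb :: "real \<Rightarrow> real" where
  "bb u = (exp u - exp (-u)) / (exp u + exp (-u))"

lemma sigmoid_bb: "2 * sigmoid v - 1 = bb (v/2)"
proof -
  have e: "exp v = exp (v/2) * exp (v/2)" by (simp add: mult_exp_exp)
  have e2: "exp (-v) = exp (-(v/2)) * exp (-(v/2))" by (simp add: mult_exp_exp)
  have e3: "exp (v/2) * exp (-(v/2)) = 1" by (simp add: mult_exp_exp)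
  have p: "exp (v/2) + exp (-(v/2)) > 0" by (simp add: add_pos_pos)
  have q: "1 + exp (-v) > 0" by (simp add: add_pos_pos)
  have "2 * sigmoid v - 1 = (1 - exp (-v)) / (1 + exp (-v))"
    unfolding sigmoid_def using q by (simp add: field_simps)
  also have "\<dots> = (exp (v/2) * exp (v/2) * exp (-(v/2)) * exp (-(v/2)) - exp (-(v/2)) * exp (-(v/2)))
                 / (exp (v/2) * exp (v/2) * exp (-(v/2)) * exp (-(v/2)) + exp (-(v/2)) * exp (-(v/2)))"
    using e2 e3 by (simp add: algebra_simps)
  also have "\<dots> = ((exp (v/2) - exp (-(v/2))) * exp (-(v/2)))
                 / ((exp (v/2) + exp (-(v/2))) * exp (-(v/2)))"
    using e3 by (simp add: algebra_simps)
  also have "\<dots> = bb (v/2)" unfolding bb_def by simp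
  finally show ?thesis .
qed

lemma bb_abs: "\<bar>bb u\<bar> < 1"
proof -
  have p: "exp u + exp (-u) > 0" by (simp add: add_pos_pos)
  have h: "\<bar>exp u - exp (-u)\<bar> < exp u + exp (-u)"
    using exp_gt_zero[of u] exp_gt_zero[of "-u"] by (simp only: abs_less_iff) linarith
  have "\<bar>bb u\<bar> = \<bar>exp u - exp (-u)\<bar> / (exp u + exp (-u))"
    unfolding bb_def using p by (simp only: abs_divide)
  also have "\<dots> < 1" using p h by (simp only: divide_less_eq_1_pos)
  finally show ?thesis .
qed

lemma bet_bound:
  fixes u x :: real
  assumes x: "\<bar>x\<bar> \<le> 1"
  shows "exp (u*x - \<bar>x\<bar>*u^2/2) \<le> 1 + bb u * x"
proof -
  define E where "E = exp u + exp (-u)"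
  have Ep: "E > 0" unfolding E_def by (simp add: add_pos_pos)
  have Eb: "E \<le> 2 * exp (u^2/2)" unfolding E_def by (rule cosh_bound)
  have b1: "1 + bb u = 2 * exp u / E" unfolding bb_def E_def[symmetric] using Ep
    by (simp add: field_simps E_def)
  have b2: "1 - bb u = 2 * exp (-u) / E" unfolding bb_def E_def[symmetric] using Ep
    by (simp add: field_simps E_def)
  have p1: "exp (u - u^2/2) \<le> 1 + bb u"
  proof -
    have "exp (u - u^2/2) = 2 * exp u / (2 * exp (u^2/2))" by (simp add: exp_diff)
    also have "\<dots> \<le> 2 * exp u / E" by (rule frac_le) (use Ep Eb in auto)
    finally show ?thesis using b1 by simp
  qed
  have p2: "exp (-u - u^2/2) \<le> 1 - bb u"
  proof -
    have "exp (-u - u^2/2) = 2 * exp (-u) / (2 * exp (u^2/2))" by (simp add: exp_diff)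
    also have "\<dots> \<le> 2 * exp (-u) / E" by (rule frac_le) (use Ep Eb in auto)
    finally show ?thesis using b2 by simp
  qed
  have cvx: "exp ((1 - t) * 0 + t * y) \<le> (1 - t) * exp 0 + t * exp y" if "0 \<le> t" "t \<le> 1" for t y :: real
    using convex_onD[OF exp_convex, of t 0 y] that by simp
  show ?thesis
  proof (cases "x \<ge> 0")
    case True
    have "exp (u*x - \<bar>x\<bar>*u^2/2) = exp ((1 - x) * 0 + x * (u - u^2/2))"
      using True by (simp add: algebra_simps)
    also have "\<dots> \<le> (1 - x) * exp 0 + x * exp (u - u^2/2)" using cvx True x by simp
    also have "\<dots> \<le> (1 - x) * 1 + x * (1 + bb u)"
      using p1 True by (simp add: mult_left_mono)
    finally show ?thesis by (simp add: algebra_simps)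
  next
    case False
    define y where "y = - x"
    have y0: "0 \<le> y" "y \<le> 1" using False x unfolding y_def by auto
    have "exp (u*x - \<bar>x\<bar>*u^2/2) = exp ((1 - y) * 0 + y * (-u - u^2/2))"
      using False unfolding y_def by (simp add: algebra_simps)
    also have "\<dots> \<le> (1 - y) * exp 0 + y * exp (-u - u^2/2)" using cvx y0 by simp
    also have "\<dots> \<le> (1 - y) * 1 + y * (1 - bb u)"
      using p2 y0 by (simp add: mult_left_mono)
    finally show ?thesis unfolding y_def by (simp add: algebra_simps)
  qed
qed

lemma frac_ext: "(k::real) \<noteq> 0 \<Longrightarrow> d = b*k \<Longrightarrow> a/b = a*k/d"
  by simp

lemma cancel_k: "(k::real) \<noteq> 0 \<Longrightarrow> n = a*k \<Longrightarrow> d = b*k \<Longrightarrow> n/d = a/b"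
  by simp

lemma alg_core:
  fixes a c y :: real
  assumes a: "a > 0" and c: "0 \<le> c" "c \<le> 1"
  shows "(y+c)^2/(2*(a+c)) - y^2/(2*a) + (y+c)^2/(2*(a+c)^2) - y^2/(2*a^2)
         \<le> y*c/a - c*y^2/(2*a^2) + c/(2*a)"
proof -
  define M where "M = a*(1-c)*(y-a)^2 + (c - c*c)*y^2 + a*(y+c*c)^2 + a*c*c*(1-c*c) + a*a*c*(1-c)"
  have cc: "c*c \<le> c" using mult_right_mono[of c 1 c] c by simp
  have c1: "c*c \<le> 1" using cc c by linarith
  have t1: "a*(1-c)*(y-a)^2 \<ge> 0" using a c by simp
  have t2: "(c - c*c)*y^2 \<ge> 0" using cc by simp
  have t3: "a*(y+c*c)^2 \<ge> 0" using a by simp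
  have t4: "a*c*c*(1-c*c) \<ge> 0" using a c c1 by simp
  have t5: "a*a*c*(1-c) \<ge> 0" using a c by simp
  have M0: "M \<ge> 0" unfolding M_def using t1 t2 t3 t4 t5 by linarith
  have ac: "a + c > 0" using a c by simp
  define D where "D = 2*a^2*(a+c)^2"
  have Dp: "D > 0" unfolding D_def using a ac by simp
  have an: "a \<noteq> 0" and acn: "a + c \<noteq> 0" using a ac by auto
  have kn: "a+c \<noteq> 0" "a \<noteq> 0" using an acn by auto
  have f1: "y*c/a = (y*c)*(2*a*(a+c)^2)/D"
    by (rule frac_ext) (use kn in \<open>auto simp: D_def power2_eq_square\<close>)
  have f2: "c*y^2/(2*a^2) = (c*y^2)*((a+c)^2)/D"
    by (rule frac_ext) (use kn in \<open>auto simp: D_def power2_eq_square\<close>)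
  have f3: "c/(2*a) = c*(a*(a+c)^2)/D"
    by (rule frac_ext) (use kn in \<open>auto simp: D_def power2_eq_square\<close>)
  have f4: "(y+c)^2/(2*(a+c)) = (y+c)^2*(a^2*(a+c))/D"
    by (rule frac_ext) (use kn in \<open>auto simp: D_def power2_eq_square\<close>)
  have f5: "y^2/(2*a) = y^2*(a*(a+c)^2)/D"
    by (rule frac_ext) (use kn in \<open>auto simp: D_def power2_eq_square\<close>)
  have f6: "(y+c)^2/(2*(a+c)^2) = (y+c)^2*(a^2)/D"
    by (rule frac_ext) (use kn in \<open>auto simp: D_def power2_eq_square\<close>)
  have f7: "y^2/(2*a^2) = y^2*((a+c)^2)/D"
    by (rule frac_ext) (use kn in \<open>auto simp: D_def power2_eq_square\<close>)
  have poly: "((y*c)*(2*a*(a+c)^2) - (c*y^2)*((a+c)^2) + c*(a*(a+c)^2))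
      - ((y+c)^2*(a^2*(a+c)) - y^2*(a*(a+c)^2) + (y+c)^2*(a^2) - y^2*((a+c)^2)) = c * M"
    unfolding M_def by (simp add: algebra_simps power2_eq_square)
  have eq: "(y*c/a - c*y^2/(2*a^2) + c/(2*a))
      - ((y+c)^2/(2*(a+c)) - y^2/(2*a) + (y+c)^2/(2*(a+c)^2) - y^2/(2*a^2))
      = c * M / D"
    unfolding f1 f2 f3 f4 f5 f6 f7 poly[symmetric] by (simp add: diff_divide_distrib add_divide_distrib)
  have "c * M / D \<ge> 0" using M0 c Dp by simp
  thus ?thesis using eq by linarith
qed

lemma alg_step:
  fixes L a th h :: real
  assumes L: "L > 0" and a: "a > 0" and g: "\<bar>h\<bar> \<le> L"
  shows "(th+h)^2/(2*L*(a+\<bar>h\<bar>)) - th^2/(2*L*a) + (th+h)^2/(2*(a+\<bar>h\<bar>)^2) - th^2/(2*a^2)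
         \<le> (th/a)*(h/L) - \<bar>h/L\<bar>*(th/a)^2/2 + \<bar>h\<bar>/(2*a)"
proof -
  define A where "A = a/L"
  have A: "A > 0" unfolding A_def using L a by simp
  have aA: "a = L*A" unfolding A_def using L by simp
  define zz :: real where "zz = (if h \<ge> 0 then 1 else -1)"
  have s2: "zz * zz = 1" unfolding zz_def by simp
  define c where "c = \<bar>h\<bar>/L"
  define y where "y = zz * th/L"
  have c: "0 \<le> c" "c \<le> 1" unfolding c_def using L g by auto
  have hc: "h = L * zz * c" unfolding c_def zz_def using L by auto
  have thy: "th = L * zz * y" unfolding y_def using L s2 by (simp add: field_simps)
  have ab: "\<bar>h\<bar> = L*c" unfolding c_def using L by simp
  have core: "(y+c)^2/(2*(A+c)) - y^2/(2*A) + (y+c)^2/(2*(A+c)^2) - y^2/(2*A^2)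
         \<le> y*c/A - c*y^2/(2*A^2) + c/(2*A)" by (rule alg_core[OF A c])
  have e1: "(th+h)^2 = L^2*(y+c)^2" unfolding thy hc using s2 by (simp add: algebra_simps power2_eq_square)
  have e2: "th^2 = L^2*y^2" unfolding thy using s2 by (simp add: algebra_simps power2_eq_square)
  have Ln: "L \<noteq> 0" using L by simp
  have L2: "L^2 \<noteq> 0" using Ln by simp
  have l1: "(th+h)^2/(2*L*(a+\<bar>h\<bar>)) = (y+c)^2/(2*(A+c))"
    by (rule cancel_k[OF L2]) (unfold e1 aA ab, simp_all add: algebra_simps power2_eq_square)
  have l2: "th^2/(2*L*a) = y^2/(2*A)"
    by (rule cancel_k[OF L2]) (unfold e2 aA, simp_all add: algebra_simps power2_eq_square)
  have l3: "(th+h)^2/(2*(a+\<bar>h\<bar>)^2) = (y+c)^2/(2*(A+c)^2)"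
    by (rule cancel_k[OF L2]) (unfold e1 aA ab, simp_all add: algebra_simps power2_eq_square)
  have l4: "th^2/(2*a^2) = y^2/(2*A^2)"
    by (rule cancel_k[OF L2]) (unfold e2 aA, simp_all add: algebra_simps power2_eq_square)
  have r1: "(th/a)*(h/L) = y*c/A"
  proof -
    have "(th/a)*(h/L) = (th*h)/(a*L)" by simp
    also have "\<dots> = y*c/A"
      by (rule cancel_k[OF L2]) (use s2 in \<open>simp_all add: thy hc aA algebra_simps power2_eq_square\<close>)
    finally show ?thesis .
  qed
  have r2: "\<bar>h/L\<bar>*(th/a)^2/2 = c*y^2/(2*A^2)"
  proof -
    have "\<bar>h/L\<bar> = c" unfolding c_def using L by simp
    moreover have "(th/a)^2 = y^2/A^2"
      using s2 Ln by (simp add: thy aA power_divide power_mult_distrib algebra_simps power2_eq_square)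
    ultimately show ?thesis by simp
  qed
  have r3: "\<bar>h\<bar>/(2*a) = c/(2*A)"
    by (rule cancel_k[of L]) (use Ln in \<open>simp_all add: ab aA\<close>)
  show ?thesis using core unfolding l1 l2 l3 l4 r1 r2 r3 .
qed

lemma two_div: "(2 * x / y) / 2 = x / (y::real)"
  by (cases "y = 0") (simp_all add: field_simps)

lemma lin_aux: "A \<le> B2 - B1 \<Longrightarrow> S \<le> 1/2*B1 \<Longrightarrow> S + A/2 \<le> 1/2*(B2::real)"
  by (simp add: field_simps)

lemma ln_step:
  fixes G h L :: real
  assumes G: "G \<ge> L" and L: "L > 0" and h: "\<bar>h\<bar> \<le> L"
  shows "\<bar>h\<bar> / (L + G) \<le> ln ((G + \<bar>h\<bar>) / L) - ln (G / L)"
proof -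
  have Gp: "G > 0" using G L by simp
  define G' where "G' = G + \<bar>h\<bar>"
  have G'p: "G' > 0" unfolding G'_def using Gp by simp
  have "ln (G / G') \<le> G / G' - 1" using ln_le_minus_one[of "G/G'"] Gp G'p by simp
  moreover have "ln (G / G') = ln (G / L) - ln (G' / L)"
    using Gp G'p L by (simp add: ln_div)
  moreover have "G / G' - 1 = - (\<bar>h\<bar> / G')" unfolding G'_def using G'p G'_def
    by (simp add: field_simps)
  moreover have "\<bar>h\<bar> / (L + G) \<le> \<bar>h\<bar> / G'"
    unfolding G'_def using h Gp by (intro divide_left_mono) auto
  ultimately show ?thesis unfolding G'_def by linarith
qed

theorem mainTheorem3:
  fixes L w1 :: real and g :: "nat \<Rightarrow> real"
  assumes "L > 0"
    and "\<And>t. t \<ge> 1 \<Longrightarrow> \<bar>g t\<bar> \<le> L"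
  shows "\<forall>t::nat.
     cocob_wealth L w1 g t > 0
   \<and> \<bar>cocob_beta L g t * g (Suc t)\<bar> < 1
   \<and> cocob_wealth L w1 g t \<ge>
       L * exp ((cocob_theta g t)\<^sup>2 / (2 * L * (cocob_G L g t + L))
                - (\<Sum>j = 1..t. \<bar>g j\<bar> / (2 * (L + cocob_G L g (j - 1)))))
   \<and> L * exp ((cocob_theta g t)\<^sup>2 / (2 * L * (cocob_G L g t + L))
                - (\<Sum>j = 1..t. \<bar>g j\<bar> / (2 * (L + cocob_G L g (j - 1)))))
       \<ge> L * exp ((cocob_theta g t)\<^sup>2 / (2 * L * (cocob_G L g t + L))
                - 1 / 2 * ln (cocob_G L g t / L))"
proof -
  note L = assms(1)
  define G where "G = cocob_G L g"
  define th where "th = cocob_theta g"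
  define W where "W = cocob_wealth L w1 g"
  define S where "S = (\<lambda>t. \<Sum>j = 1..t. \<bar>g j\<bar> / (2 * (L + G (j - 1))))"
  define bt where "bt = cocob_beta L g"
  have GS: "G (Suc t) = G t + \<bar>g (Suc t)\<bar>" for t unfolding G_def cocob_G_def by simp
  have GL: "G t \<ge> L" for t unfolding G_def cocob_G_def by (simp add: sum_nonneg)
  have G0: "G 0 = L" unfolding G_def cocob_G_def by simp
  have th0: "th 0 = 0" unfolding th_def cocob_theta_def by simp
  have thS: "th (Suc t) = th t + g (Suc t)" for t unfolding th_def cocob_theta_def by simp
  have S0: "S 0 = 0" unfolding S_def by simp
  have SS: "S (Suc t) = S t + \<bar>g (Suc t)\<bar> / (2 * (L + G t))" for t unfolding S_def by simp
  have btb: "bt t = bb (th t / (G t + L)) / L" for t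
  proof -
    have "2 * cocob_theta g t / (cocob_G L g t + L) / 2 = th t / (G t + L)"
      unfolding th_def G_def by (rule two_div)
    thus ?thesis unfolding bt_def cocob_beta_def
      using sigmoid_bb[of "2 * cocob_theta g t / (cocob_G L g t + L)"] by simp
  qed
  have bt0: "bt 0 = 0" using btb[of 0] th0 by (simp add: bb_def)
  have wS: "cocob_w L w1 g (Suc t) = w1 + bt t * W t" for t
  proof (cases t)
    case 0
    then show ?thesis using bt0 by simp
  next
    case (Suc n) then show ?thesis by (simp add: W_def cocob_wealth_def bt_def)
  qed
  have WS: "W (Suc t) = W t * (1 + bt t * g (Suc t))" for t
    using wS[of t] by (simp add: W_def cocob_wealth_def algebra_simps)
  have W0: "W 0 = L" by (simp add: W_def cocob_wealth_def)
  have gb: "\<bar>g (Suc t)\<bar> \<le> L" for t using assms(2) by simp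
  have ap: "G t + L > 0" for t using GL[of t] L by simp
  have absb: "\<bar>bt t * g (Suc t)\<bar> < 1" for t
  proof -
    have q: "\<bar>g (Suc t)\<bar> / L \<le> 1" using gb[of t] L by simp
    have "\<bar>bt t * g (Suc t)\<bar> = \<bar>bb (th t/(G t+L))\<bar> * (\<bar>g (Suc t)\<bar> / L)"
      using btb[of t] L by (simp add: abs_mult)
    also have "\<dots> \<le> \<bar>bb (th t/(G t+L))\<bar>" by (rule mult_left_le[OF q]) simp
    also have "\<dots> < 1" by (rule bb_abs)
    finally show ?thesis .
  qed
  define Phi where "Phi = (\<lambda>t. th t^2/(2*L*(G t + L)) + th t^2/(2*(G t+L)^2) - S t)"
  have inv: "W t \<ge> L * exp (Phi t)" for t
  proof (induction t)
    case 0
    then show ?case using W0 th0 S0 by (simp add: Phi_def)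
  next
    case (Suc t)
    define a where "a = G t + L"
    define u where "u = th t / a"
    define x where "x = g (Suc t) / L"
    have a: "a > 0" unfolding a_def using ap by simp
    have x: "\<bar>x\<bar> \<le> 1" unfolding x_def using gb[of t] L by simp
    have f: "1 + bt t * g (Suc t) = 1 + bb u * x"
      unfolding x_def u_def a_def using btb[of t] by simp
    have bet: "exp (u*x - \<bar>x\<bar>*u^2/2) \<le> 1 + bb u * x" by (rule bet_bound[OF x])
    have alg: "Phi (Suc t) \<le> Phi t + (u*x - \<bar>x\<bar>*u^2/2)"
    proof -
      have st: "(th t + g (Suc t))^2/(2*L*(a+\<bar>g (Suc t)\<bar>)) - (th t)^2/(2*L*a)
          + (th t + g (Suc t))^2/(2*(a+\<bar>g (Suc t)\<bar>)^2) - (th t)^2/(2*a^2)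
         \<le> (th t/a)*(g (Suc t)/L) - \<bar>g (Suc t)/L\<bar>*(th t/a)^2/2 + \<bar>g (Suc t)\<bar>/(2*a)"
        by (rule alg_step[OF L a gb])
      have e: "G (Suc t) + L = a + \<bar>g (Suc t)\<bar>" unfolding a_def GS by simp
      have e2: "L + G t = a" unfolding a_def by simp
      show ?thesis using st unfolding Phi_def thS SS e e2 u_def[symmetric] x_def[symmetric] a_def[symmetric]
        by (simp add: u_def x_def)
    qed
    have "L * exp (Phi (Suc t)) \<le> L * exp (Phi t + (u*x - \<bar>x\<bar>*u^2/2))"
      using alg L by simp
    also have "\<dots> = L * exp (Phi t) * exp (u*x - \<bar>x\<bar>*u^2/2)" by (simp add: exp_add)
    also have "\<dots> \<le> W t * (1 + bb u * x)"
    proof (rule mult_mono)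
      show "L * exp (Phi t) \<le> W t" by (rule Suc.IH)
      show "exp (u*x - \<bar>x\<bar>*u^2/2) \<le> 1 + bb u * x" by (rule bet)
      have "0 < L * exp (Phi t)" using L by simp
      thus "0 \<le> W t" using Suc.IH by linarith
      show "0 \<le> exp (u*x - \<bar>x\<bar>*u^2/2)" by simp
    qed
    also have "\<dots> = W (Suc t)" using WS[of t] f by simp
    finally show ?case .
  qed
  have Sln: "S t \<le> 1/2 * ln (G t / L)" for t
  proof (induction t)
    case 0 then show ?case using S0 G0 L by simp
  next
    case (Suc t)
    have "\<bar>g (Suc t)\<bar> / (L + G t) \<le> ln ((G t + \<bar>g (Suc t)\<bar>) / L) - ln (G t / L)"
      by (rule ln_step[OF GL L gb])
    moreover have "\<bar>g (Suc t)\<bar> / (2 * (L + G t)) = (\<bar>g (Suc t)\<bar> / (L + G t)) / 2" by simp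
    ultimately show ?case using Suc.IH lin_aux unfolding SS GS by metis
  qed
  have fin: "W t > 0 \<and> \<bar>bt t * g (Suc t)\<bar> < 1
     \<and> W t \<ge> L * exp (th t^2/(2*L*(G t + L)) - S t)
     \<and> L * exp (th t^2/(2*L*(G t + L)) - S t) \<ge> L * exp (th t^2/(2*L*(G t + L)) - 1/2 * ln (G t / L))" for t
  proof -
    have "0 \<le> th t^2/(2*(G t+L)^2)" by simp
    hence "L * exp (th t^2/(2*L*(G t + L)) - S t) \<le> L * exp (Phi t)"
      unfolding Phi_def using L by simp
    hence w1: "W t \<ge> L * exp (th t^2/(2*L*(G t + L)) - S t)" using inv[of t] by linarith
    have w0: "W t > 0" using w1 L by (smt (verit) exp_gt_zero mult_pos_pos)
    have w3: "L * exp (th t^2/(2*L*(G t + L)) - S t) \<ge> L * exp (th t^2/(2*L*(G t + L)) - 1/2 * ln (G t / L))"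
      using Sln[of t] L by simp
    show ?thesis using w0 w1 w3 absb[of t] by blast
  qed
  show ?thesis using fin unfolding W_def bt_def th_def G_def S_def by blast
qed

end
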